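(* Let $n \geq 2$ be an integer and $A$ a finite set of size $q \geq 2$. Let $d_1, \dots, d_\ell$ be the divisors $d$ of $n$ with $d\neq 1$ (including $d=n$). Then \[ \mathrm{ICA}(\mathbb{Z}_n; A) \cong (\mathbb{Z}_{d_1} \wr \mathrm{Sym}_{\alpha(d_1,q)}) \times \dots \times (\mathbb{Z}_{d_\ell} \wr \mathrm{Sym}_{\alpha(d_\ell,q)}) \times \mathrm{Sym}_q. \]
   Context: A cellular automaton over $\mathbb{Z}_n$ and $A$ is a map $\tau: A^{\mathbb{Z}_n}\to A^{\mathbb{Z}_n}$ for which there exist a finite $S\subseteq\mathbb{Z}_n$ and $\mu:A^S\to A$ with $(g)(x)\tau = ((R_g\circ x)|_S)\mu$ for all $x$ and $g$, where $R_g\circ x$ is $h\mapsto x(h+g)$ (maps applied on the right); $\mathrm{CA}(\mathbb{Z}_n;A)$ is the semigroup of these under composition and $\mathrm{ICA}(\mathbb{Z}_n;A)$ is its group of units. $\mathrm{Sym}_\alpha$ is the symmetric group on $\{1,\dots,\alpha\}$. $\mathbb{Z}_d\wr\mathrm{Sym}_\alpha = \{(v;\phi): v\in(\mathbb{Z}_d)^\alpha,\ \phi\in\mathrm{Sym}_\alpha\}$ with product $(v;\phi)(w;\psi) = (v + w^\phi;\phi\psi)$, where $\phi$ acts on $w$ by permuting coordinates. $\alpha(d,q) = \frac{1}{d}\sum_{b\mid d}\mu(d/b) q^b$ with $\mu$ the Möbius function (the number of orbits of size $d$ of the cyclic shift on $A^n$). *)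

theory Defs
  imports "HOL-Algebra.Algebra" "HOL-Computational_Algebra.Squarefree"
begin

definition moebius :: "nat \<Rightarrow> int" where
  "moebius m = (if squarefree m then (-1) ^ card (prime_factors m) else 0)"

definition alpha :: "nat \<Rightarrow> nat \<Rightarrow> nat" where
  "alpha d q = nat ((\<Sum>b\<in>{b. b dvd d}. moebius (d div b) * int q ^ b) div int d)"

text \<open>Configurations A^(Z_n); Z_n is represented by {0..<n} with addition mod n.\<close>
definition configs :: "nat \<Rightarrow> 'a set \<Rightarrow> (nat \<Rightarrow> 'a) set" where
  "configs n A = ({0..<n} \<rightarrow>\<^sub>E A)"

definition is_CA :: "nat \<Rightarrow> 'a set \<Rightarrow> ((nat \<Rightarrow> 'a) \<Rightarrow> (nat \<Rightarrow> 'a)) \<Rightarrow> bool" where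
  "is_CA n A \<tau> \<longleftrightarrow>
     \<tau> \<in> configs n A \<rightarrow>\<^sub>E configs n A \<and>
     (\<exists>S \<mu>. S \<subseteq> {0..<n} \<and> \<mu> \<in> (S \<rightarrow>\<^sub>E A) \<rightarrow> A \<and>
        (\<forall>x\<in>configs n A. \<forall>g\<in>{0..<n}.
            \<tau> x g = \<mu> (restrict (\<lambda>h. x ((h + g) mod n)) S)))"

text \<open>The semigroup (monoid) CA(Z_n;A) under composition; maps act on the right,
  so the product tau sigma is "first tau, then sigma".\<close>
definition CA_monoid :: "nat \<Rightarrow> 'a set \<Rightarrow> ((nat \<Rightarrow> 'a) \<Rightarrow> (nat \<Rightarrow> 'a)) monoid" where
  "CA_monoid n A = \<lparr> carrier = {\<tau>. is_CA n A \<tau>},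
                     monoid.mult = (\<lambda>\<tau> \<sigma>. \<lambda>x\<in>configs n A. \<sigma> (\<tau> x)),
                     one = (\<lambda>x\<in>configs n A. x) \<rparr>"

definition ICA :: "nat \<Rightarrow> 'a set \<Rightarrow> ((nat \<Rightarrow> 'a) \<Rightarrow> (nat \<Rightarrow> 'a)) monoid" where
  "ICA n A = units_of (CA_monoid n A)"

text \<open>Permutations are
  composed as functions (as in sym_group), and w^phi is w o phi^-1, so that this is
  a group action.\<close>
definition wreath :: "nat \<Rightarrow> nat \<Rightarrow> ((nat \<Rightarrow> nat) \<times> (nat \<Rightarrow> nat)) monoid" where
  "wreath d a = \<lparr> carrier = ({1..a} \<rightarrow>\<^sub>E {0..<d}) \<times> {\<phi>. \<phi> permutes {1..a}},
                  monoid.mult = (\<lambda>(v, \<phi>) (w, \<psi>).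
                            ((\<lambda>i\<in>{1..a}. (v i + w (Hilbert_Choice.inv \<phi> i)) mod d), \<phi> \<circ> \<psi>)),
                  one = ((\<lambda>i\<in>{1..a}. 0), id) \<rparr>"

end

theory Submission
  imports Defs
begin


lemma moebius_1 [simp]: "moebius 1 = 1"
  by (simp add: moebius_def)

lemma moebius_prime_mult:
  assumes p: "Factorial_Ring.prime (p::nat)" and c: "c > 0" and nd: "\<not> p dvd c"
  shows "moebius (p * c) = - moebius c"
proof -
  have cop: "coprime p c" using p nd by (simp add: prime_imp_coprime)
  have sq: "squarefree (p * c) \<longleftrightarrow> squarefree c"
    using squarefree_mult_coprime[OF cop] squarefree_prime[OF p] squarefree_multD(2)[of p c] by blast
  have pf: "prime_factors (p * c) = insert p (prime_factors c)"
    using p c by (simp add: prime_factors_product prime_prime_factors)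
  have pn: "p \<notin> prime_factors c" using nd by auto
  show ?thesis unfolding moebius_def using sq pf pn by (simp add: card_insert_if)
qed

lemma moebius_sum:
  assumes "m > (0::nat)"
  shows "(\<Sum>b\<in>{b. b dvd m}. moebius b) = (if m = 1 then 1 else 0)"
proof (cases "m = 1")
  case True then show ?thesis by (simp add: moebius_def)
next
  case False
  then obtain p where p: "Factorial_Ring.prime p" "p dvd m" using assms prime_factor_nat by blast
  define B where "B = {b. b dvd m \<and> \<not> p dvd b}"
  define C where "C = {b. b dvd m \<and> p dvd b}"
  have fin: "finite {b. b dvd m}" using assms by simp
  have split: "{b. b dvd m} = B \<union> C" "B \<inter> C = {}" unfolding B_def C_def by auto
  have finB: "finite B" and finC: "finite C" using fin split by auto
  have "(\<Sum>b\<in>{b. b dvd m}. moebius b) = sum moebius B + sum moebius C"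
    using split finB finC by (simp add: sum.union_disjoint)
  moreover have "sum moebius C = - sum moebius B"
  proof -
    define C1 where "C1 = (\<lambda>c. p * c) ` B"
    have C1C': "\<And>b. b \<in> B \<Longrightarrow> p * b dvd m"
    proof -
      fix b assume "b \<in> B"
      then have "b dvd m" "\<not> p dvd b" unfolding B_def by auto
      then have "coprime p b" using p by (simp add: prime_imp_coprime)
      then show "p * b dvd m" using \<open>b dvd m\<close> p(2) by (simp add: divides_mult)
    qed
    have C1C: "C1 \<subseteq> C" unfolding C1_def using C1C' unfolding C_def by auto
    have "sum moebius C = sum moebius C1 + sum moebius (C - C1)"
      using finC C1C by (metis add.commute sum.subset_diff)
    moreover have "sum moebius (C - C1) = 0"
    proof (rule sum.neutral, rule ballI)
      fix b assume b: "b \<in> C - C1"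
      then have bm: "b dvd m" "p dvd b" unfolding C_def by auto
      then obtain c where bc: "b = p * c" by auto
      have c0: "c > 0" using bm assms bc by (metis dvd_0_left_iff gr0I mult_0_right not_gr0)
      have "p dvd c"
      proof (rule ccontr)
        assume "\<not> p dvd c"
        moreover have "c dvd m" using bm bc by (metis dvd_mult_right)
        ultimately have "c \<in> B" unfolding B_def by auto
        then have "b \<in> C1" using bc C1_def by auto
        then show False using b by auto
      qed
      then have "p * p dvd b" using bc by auto
      then have "\<not> squarefree b" using p by (intro not_squarefreeI[of p]) (auto simp: power2_eq_square)
      then show "moebius b = 0" by (simp add: moebius_def)
    qed
    moreover have "sum moebius C1 = - sum moebius B"
    proof -
      have inj: "inj_on (\<lambda>c. p * c) B" using p by (auto simp: inj_on_def prime_gt_0_nat)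
      have "sum moebius C1 = (\<Sum>c\<in>B. moebius (p * c))" unfolding C1_def
        by (rule sum.reindex[OF inj, unfolded comp_def])
      also have "\<dots> = (\<Sum>c\<in>B. - moebius c)"
      proof (rule sum.cong[OF refl])
        fix c assume "c \<in> B"
        then have "c dvd m" "\<not> p dvd c" unfolding B_def by auto
        then have "c > 0" using assms by (metis dvd_0_left_iff gr0I)
        then show "moebius (p * c) = - moebius c"
          using moebius_prime_mult[OF p(1)] \<open>\<not> p dvd c\<close> by simp
      qed
      finally show ?thesis by (simp add: sum_negf)
    qed
    ultimately show ?thesis by simp
  qed
  ultimately show ?thesis using False by simp
qed

lemma sum_divisors_flip:
  assumes "e > (0::nat)"
  shows "(\<Sum>k\<in>{k. k dvd e}. g (e div k)) = (\<Sum>k\<in>{k. k dvd e}. g k)"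
  by (rule sum.reindex_bij_witness[of _ "\<lambda>k. e div k" "\<lambda>k. e div k"])
     (use assms in \<open>auto elim!: dvdE\<close>)

lemma moebius_inner:
  assumes "d > (0::nat)" "c dvd d"
  shows "(\<Sum>b\<in>{b\<in>{b. b dvd d}. c dvd b}. moebius (d div b)) = (if c = d then 1 else 0)"
proof -
  obtain e where e: "d = c * e" using assms by auto
  have c0: "c > 0" and e0: "e > 0" using e assms by auto
  have set: "{b\<in>{b. b dvd d}. c dvd b} = (\<lambda>k. c * k) ` {k. k dvd e}"
    using e c0 by (auto elim!: dvdE)
  have inj: "inj_on (\<lambda>k. c * k) {k. k dvd e}" using c0 by (auto simp: inj_on_def)
  have "(\<Sum>b\<in>{b\<in>{b. b dvd d}. c dvd b}. moebius (d div b)) = (\<Sum>k\<in>{k. k dvd e}. moebius (d div (c * k)))"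
    unfolding set by (simp add: sum.reindex[OF inj])
  also have "\<dots> = (\<Sum>k\<in>{k. k dvd e}. moebius (e div k))"
    using e c0 by (intro sum.cong) (auto simp: div_mult2_eq)
  also have "\<dots> = (\<Sum>k\<in>{k. k dvd e}. moebius k)" by (rule sum_divisors_flip[OF e0])
  also have "\<dots> = (if e = 1 then 1 else 0)" by (rule moebius_sum[OF e0])
  finally show ?thesis using e c0 by auto
qed

lemma moebius_inversion:
  fixes f F :: "nat \<Rightarrow> int"
  assumes d: "d > 0" and F: "\<And>m. m dvd d \<Longrightarrow> F m = (\<Sum>c\<in>{c. c dvd m}. f c)"
  shows "(\<Sum>b\<in>{b. b dvd d}. moebius (d div b) * F b) = f d"
proof -
  define D where "D = {b. b dvd d}"
  have finD: "finite D" using d by (simp add: D_def)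
  have "(\<Sum>b\<in>D. moebius (d div b) * F b) = (\<Sum>b\<in>D. \<Sum>c\<in>{c\<in>D. c dvd b}. moebius (d div b) * f c)"
  proof (rule sum.cong[OF refl])
    fix b assume b: "b \<in> D"
    then have "{c\<in>D. c dvd b} = {c. c dvd b}" unfolding D_def by (auto intro: dvd_trans)
    then show "moebius (d div b) * F b = (\<Sum>c\<in>{c\<in>D. c dvd b}. moebius (d div b) * f c)"
      using F b unfolding D_def by (simp add: sum_distrib_left)
  qed
  also have "\<dots> = (\<Sum>c\<in>D. \<Sum>b\<in>{b\<in>D. c dvd b}. moebius (d div b) * f c)"
    by (rule sum.swap_restrict[OF finD finD])
  also have "\<dots> = (\<Sum>c\<in>D. (if c = d then 1 else 0) * f c)"
  proof (rule sum.cong[OF refl])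
    fix c assume c: "c \<in> D"
    show "(\<Sum>b\<in>{b\<in>D. c dvd b}. moebius (d div b) * f c) = (if c = d then 1 else 0) * f c"
      using moebius_inner[OF d, of c] c unfolding D_def by (simp add: sum_distrib_right[symmetric])
  qed
  also have "\<dots> = f d" using finD d by (simp add: D_def if_distrib[where f="\<lambda>x. x * _"] sum.delta cong: if_cong)
  finally show ?thesis by (simp add: D_def)
qed



definition sh :: "nat \<Rightarrow> nat \<Rightarrow> (nat \<Rightarrow> 'a) \<Rightarrow> (nat \<Rightarrow> 'a)" where
  "sh n g x = (\<lambda>h\<in>{0..<n}. x ((h + g) mod n))"

lemma configs_arb: "x \<in> configs n A \<Longrightarrow> h \<notin> {0..<n} \<Longrightarrow> x h = undefined"
  unfolding configs_def by (rule PiE_arb)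

lemma configs_in: "x \<in> configs n A \<Longrightarrow> h < n \<Longrightarrow> x h \<in> A"
  unfolding configs_def by auto

lemma sh_in: "n > 0 \<Longrightarrow> x \<in> configs n A \<Longrightarrow> sh n g x \<in> configs n A"
  unfolding sh_def configs_def by auto

lemma sh_sh: "n > 0 \<Longrightarrow> sh n g (sh n h x) = sh n (h + g) x"
  unfolding sh_def by (auto simp: fun_eq_iff mod_add_left_eq add.assoc) (metis add.commute)

lemma configs_eqI: "x \<in> configs n A \<Longrightarrow> y \<in> configs n A \<Longrightarrow> (\<And>h. h < n \<Longrightarrow> x h = y h) \<Longrightarrow> x = y"
  unfolding configs_def by (auto intro: PiE_ext)

lemma sh_nmult: "n > 0 \<Longrightarrow> x \<in> configs n A \<Longrightarrow> sh n (n * k) x = x"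
  by (rule configs_eqI[OF sh_in], assumption+) (simp add: sh_def)

lemma sh_0: "n > 0 \<Longrightarrow> x \<in> configs n A \<Longrightarrow> sh n 0 x = x"
  using sh_nmult[of n x A 0] by simp

lemma sh_inj:
  assumes n: "n > 0" and x: "x \<in> configs n A" and y: "y \<in> configs n A" and e: "sh n g x = sh n g y"
  shows "x = y"
proof -
  have "sh n ((n - 1) * g) (sh n g x) = sh n (n * g) x" using n by (simp add: sh_sh algebra_simps)
  moreover have "sh n ((n - 1) * g) (sh n g y) = sh n (n * g) y" using n by (simp add: sh_sh algebra_simps)
  ultimately show ?thesis using e sh_nmult[OF n x] sh_nmult[OF n y] by simp
qed

definition per :: "nat \<Rightarrow> (nat \<Rightarrow> 'a) \<Rightarrow> nat" where
  "per n x = (LEAST p. 0 < p \<and> sh n p x = x)"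

lemma per_props:
  assumes n: "n > 0" and x: "x \<in> configs n A"
  shows "0 < per n x" "sh n (per n x) x = x"
proof -
  have "0 < n \<and> sh n n x = x" using sh_nmult[OF n x, of 1] n by simp
  then have "0 < per n x \<and> sh n (per n x) x = x" unfolding per_def by (rule LeastI)
  then show "0 < per n x" "sh n (per n x) x = x" by auto
qed

lemma per_least: "0 < p \<Longrightarrow> sh n p x = x \<Longrightarrow> per n x \<le> p"
  unfolding per_def by (rule Least_le) simp

lemma sh_per_mult:
  assumes n: "n > 0" and x: "x \<in> configs n A"
  shows "sh n (per n x * k) x = x"
proof (induction k)
  case 0 then show ?case using sh_0[OF n x] by simp
next
  case (Suc k)
  have "sh n (per n x * Suc k) x = sh n (per n x) (sh n (per n x * k) x)"
    using n by (simp add: sh_sh algebra_simps)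
  then show ?case using Suc per_props[OF n x] by simp
qed

lemma sh_mod_per:
  assumes n: "n > 0" and x: "x \<in> configs n A"
  shows "sh n g x = sh n (g mod per n x) x"
proof -
  have "sh n g x = sh n (g mod per n x) (sh n (per n x * (g div per n x)) x)"
    using n by (simp add: sh_sh)
  then show ?thesis using sh_per_mult[OF n x] by simp
qed

lemma sh_fix_iff:
  assumes n: "n > 0" and x: "x \<in> configs n A"
  shows "sh n g x = x \<longleftrightarrow> per n x dvd g"
proof
  assume "per n x dvd g"
  then obtain k where "g = per n x * k" by auto
  then show "sh n g x = x" using sh_per_mult[OF n x] by simp
next
  assume g: "sh n g x = x"
  have "sh n (g mod per n x) x = x" using g sh_mod_per[OF n x, of g] by simp
  moreover have "g mod per n x < per n x" using per_props[OF n x] by simp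
  ultimately have "\<not> 0 < g mod per n x" using per_least[of "g mod per n x" n x] by auto
  then show "per n x dvd g" by (simp add: dvd_eq_mod_eq_0)
qed

lemma per_dvd_n: "n > 0 \<Longrightarrow> x \<in> configs n A \<Longrightarrow> per n x dvd n"
  using sh_fix_iff[of n x A n] sh_nmult[of n x A 1] by simp

lemma sh_eq_iff:
  assumes n: "n > 0" and x: "x \<in> configs n A"
  shows "sh n a x = sh n b x \<longleftrightarrow> a mod per n x = b mod per n x"
proof
  assume "a mod per n x = b mod per n x"
  then show "sh n a x = sh n b x" using sh_mod_per[OF n x, of a] sh_mod_per[OF n x, of b] by simp
next
  assume e: "sh n a x = sh n b x"
  define p where "p = per n x"
  have p0: "p > 0" using per_props[OF n x] p_def by simp
  have key: "\<And>a b. a \<le> b \<Longrightarrow> sh n a x = sh n b x \<Longrightarrow> p dvd (b - a)"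
  proof -
    fix a b :: nat assume ab: "a \<le> b" and e: "sh n a x = sh n b x"
    have "sh n ((n - 1) * a) (sh n a x) = sh n (n * a) x" using n by (simp add: sh_sh algebra_simps)
    also have "\<dots> = x" using sh_nmult[OF n x] by simp
    finally have 1: "sh n ((n - 1) * a) (sh n b x) = x" using e by simp
    have "sh n ((n - 1) * a) (sh n b x) = sh n (b - a) (sh n (n * a) x)"
      using n ab by (simp add: sh_sh algebra_simps)
    then have "sh n (b - a) x = x" using 1 sh_nmult[OF n x] by simp
    then show "p dvd (b - a)" using sh_fix_iff[OF n x] p_def by simp
  qed
  show "a mod per n x = b mod per n x"
  proof (cases "a \<le> b")
    case True
    then have "p dvd b - a" using key e by simp
    then show ?thesis using True p_def by (metis mod_eq_dvd_iff_nat)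
  next
    case False
    then have "p dvd a - b" using key e by simp
    then show ?thesis using False p_def by (metis mod_eq_dvd_iff_nat nat_le_linear)
  qed
qed

lemma per_sh:
  assumes n: "n > 0" and x: "x \<in> configs n A"
  shows "per n (sh n g x) = per n x"
proof -
  have "\<And>h. sh n h (sh n g x) = sh n g x \<longleftrightarrow> sh n h x = x"
  proof
    fix h assume "sh n h (sh n g x) = sh n g x"
    then have "sh n g (sh n h x) = sh n g x" using n by (simp add: sh_sh add.commute)
    then show "sh n h x = x" using sh_inj[OF n sh_in[OF n x] x] by simp
  next
    fix h assume "sh n h x = x"
    then show "sh n h (sh n g x) = sh n g x" using n by (metis sh_sh add.commute)
  qed
  then show ?thesis unfolding per_def by simp
qed



definition orb :: "nat \<Rightarrow> (nat \<Rightarrow> 'a) \<Rightarrow> (nat \<Rightarrow> 'a) set" where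
  "orb n x = range (\<lambda>g. sh n g x)"

definition rep :: "nat \<Rightarrow> (nat \<Rightarrow> 'a) \<Rightarrow> (nat \<Rightarrow> 'a)" where
  "rep n x = (SOME y. y \<in> orb n x)"

lemma orb_self: "n > 0 \<Longrightarrow> x \<in> configs n A \<Longrightarrow> x \<in> orb n x"
  unfolding orb_def using sh_0 by (metis rangeI)

lemma orb_sym:
  assumes n: "n > 0" and x: "x \<in> configs n A" and y: "y \<in> orb n x"
  shows "x \<in> orb n y"
proof -
  obtain g where g: "y = sh n g x" using y unfolding orb_def by auto
  have "sh n ((n - 1) * g) y = sh n (n * g) x" using n g by (simp add: sh_sh algebra_simps)
  then have "sh n ((n - 1) * g) y = x" using sh_nmult[OF n x] by simp
  then show ?thesis unfolding orb_def by (metis rangeI)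
qed

lemma orb_sub:
  assumes n: "n > 0" and y: "y \<in> orb n x"
  shows "orb n y \<subseteq> orb n x"
proof
  fix z assume "z \<in> orb n y"
  then obtain h where "z = sh n h y" unfolding orb_def by auto
  moreover obtain g where "y = sh n g x" using y unfolding orb_def by auto
  ultimately have "z = sh n (g + h) x" using n by (simp add: sh_sh)
  then show "z \<in> orb n x" unfolding orb_def by auto
qed

lemma orb_eq:
  assumes n: "n > 0" and x: "x \<in> configs n A" and y: "y \<in> orb n x"
  shows "orb n y = orb n x"
  using orb_sub[OF n y] orb_sub[OF n orb_sym[OF n x y]] by auto

lemma orb_configs:
  assumes n: "n > 0" and x: "x \<in> configs n A" and y: "y \<in> orb n x"
  shows "y \<in> configs n A" "per n y = per n x"
  using y sh_in[OF n x] per_sh[OF n x] unfolding orb_def by auto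

lemma rep_in: "n > 0 \<Longrightarrow> x \<in> configs n A \<Longrightarrow> rep n x \<in> orb n x"
  unfolding rep_def using orb_self by (metis someI)

definition P :: "nat \<Rightarrow> 'a set \<Rightarrow> nat \<Rightarrow> (nat \<Rightarrow> 'a) set" where
  "P n A d = {x \<in> configs n A. per n x = d}"

definition R :: "nat \<Rightarrow> 'a set \<Rightarrow> nat \<Rightarrow> (nat \<Rightarrow> 'a) set" where
  "R n A d = rep n ` P n A d"

lemma R_props:
  assumes n: "n > 0" and r: "r \<in> R n A d"
  shows "r \<in> configs n A" "per n r = d" "rep n r = r"
proof -
  obtain x where x: "x \<in> configs n A" "per n x = d" "r = rep n x" using r unfolding R_def P_def by auto
  have ro: "r \<in> orb n x" using rep_in[OF n x(1)] x(3) by simp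
  show "r \<in> configs n A" "per n r = d" using orb_configs[OF n x(1) ro] x by auto
  show "rep n r = r" using orb_eq[OF n x(1) ro] x(3) unfolding rep_def by simp
qed

lemma bij_RP:
  assumes n: "n > 0"
  shows "bij_betw (\<lambda>(r, k). sh n k r) (R n A d \<times> {0..<d}) (P n A d)"
proof -
  have inj: "inj_on (\<lambda>(r, k). sh n k r) (R n A d \<times> {0..<d})"
  proof (rule inj_onI, clarsimp)
    fix r k r' k'
    assume r: "r \<in> R n A d" and k: "k < d" and r': "r' \<in> R n A d" and k': "k' < d"
      and e: "sh n k r = sh n k' r'"
    note rp = R_props[OF n r] and rp' = R_props[OF n r']
    have "orb n (sh n k r) = orb n r" using orb_eq[OF n rp(1)] unfolding orb_def by auto
    moreover have "orb n (sh n k' r') = orb n r'" using orb_eq[OF n rp'(1)] unfolding orb_def by auto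
    ultimately have "orb n r = orb n r'" using e by simp
    then have "rep n r = rep n r'" unfolding rep_def by simp
    then have rr: "r = r'" using rp(3) rp'(3) by simp
    then have "k mod d = k' mod d" using e sh_eq_iff[OF n rp(1)] rp(2) by simp
    then show "r = r' \<and> k = k'" using rr k k' by simp
  qed
  have img: "(\<lambda>(r, k). sh n k r) ` (R n A d \<times> {0..<d}) = P n A d"
  proof
    show "(\<lambda>(r, k). sh n k r) ` (R n A d \<times> {0..<d}) \<subseteq> P n A d"
    proof clarify
      fix r k assume r: "r \<in> R n A d" and k: "k \<in> {0..<d}"
      show "sh n k r \<in> P n A d" unfolding P_def
        using sh_in[OF n R_props(1)[OF n r]] per_sh[OF n R_props(1)[OF n r]] R_props(2)[OF n r] by simp
    qed
  next
    show "P n A d \<subseteq> (\<lambda>(r, k). sh n k r) ` (R n A d \<times> {0..<d})"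
    proof
      fix x assume x: "x \<in> P n A d"
      then have xc: "x \<in> configs n A" and px: "per n x = d" unfolding P_def by auto
      define r where "r = rep n x"
      have rR: "r \<in> R n A d" using x unfolding R_def r_def by auto
      have ro: "r \<in> orb n x" using rep_in[OF n xc] r_def by simp
      have "x \<in> orb n r" using orb_sym[OF n xc ro] .
      then obtain g where g: "x = sh n g r" unfolding orb_def by auto
      have "x = sh n (g mod d) r" using g sh_mod_per[OF n R_props(1)[OF n rR]] R_props(2)[OF n rR] by simp
      moreover have "g mod d < d" using per_props(1)[OF n xc] px by simp
      ultimately show "x \<in> (\<lambda>(r, k). sh n k r) ` (R n A d \<times> {0..<d})" using rR by force
    qed
  qed
  show ?thesis using inj img by (simp add: bij_betw_def)
qed

lemma finite_configs: "finite A \<Longrightarrow> finite (configs n A)"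
  unfolding configs_def by (simp add: finite_PiE)

lemma card_P:
  assumes n: "n > 0" and A: "finite A"
  shows "card (P n A d) = card (R n A d) * d"
proof -
  have "finite (R n A d)" using finite_configs[OF A] R_props(1)[OF n] by (meson finite_subset subsetI)
  have "card (R n A d \<times> {0..<d}) = card (P n A d)" by (rule bij_betw_same_card[OF bij_RP[OF n]])
  then show ?thesis by (simp add: card_cartesian_product)
qed

lemma card_fix:
  assumes n: "n > 0" and A: "finite A" and d: "d dvd n"
  shows "card {x \<in> configs n A. sh n d x = x} = card A ^ d"
proof -
  have d0: "d > 0" using d n by (metis dvd_0_left_iff gr0I)
  have dn: "d \<le> n" using d n by (simp add: dvd_imp_le)
  define Q where "Q = {x \<in> configs n A. sh n d x = x}"
  define f where "f = (\<lambda>x::nat \<Rightarrow> 'a. restrict x {0..<d})"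
  define g where "g = (\<lambda>y::nat \<Rightarrow> 'a. \<lambda>h\<in>{0..<n}. y (h mod d))"
  have b: "bij_betw f Q ({0..<d} \<rightarrow>\<^sub>E A)"
  proof (rule bij_betw_byWitness[where f'=g])
    show "\<forall>x\<in>Q. g (f x) = x"
    proof
      fix x assume "x \<in> Q"
      then have xc: "x \<in> configs n A" and fx: "sh n d x = x" unfolding Q_def by auto
      have pd: "per n x dvd d" using sh_fix_iff[OF n xc] fx by simp
      show "g (f x) = x"
      proof (rule configs_eqI[OF _ xc])
        have "\<And>h. h < n \<Longrightarrow> x (h mod d) \<in> A"
          using configs_in[OF xc] d0 dn by (meson le_trans mod_less_divisor not_le)
        then show "g (f x) \<in> configs n A" unfolding g_def f_def configs_def using d0 by auto
        fix h assume h: "h < n"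
        have "sh n (d * (h div d)) x = x" using sh_fix_iff[OF n xc] pd by simp
        then have "sh n (d * (h div d)) x (h mod d) = x (h mod d)" by simp
        moreover have "h mod d < n" using d0 dn by (meson le_trans mod_less_divisor not_le)
        ultimately have "x ((h mod d + d * (h div d)) mod n) = x (h mod d)" unfolding sh_def by simp
        then have "x h = x (h mod d)" using h by simp
        then show "g (f x) h = x h" unfolding g_def f_def using h d0 by simp
      qed
    qed
    show "\<forall>y\<in>{0..<d} \<rightarrow>\<^sub>E A. f (g y) = y"
    proof
      fix y assume y: "y \<in> {0..<d} \<rightarrow>\<^sub>E A"
      show "f (g y) = y"
      proof (rule PiE_ext[OF _ y])
        show "f (g y) \<in> {0..<d} \<rightarrow>\<^sub>E A" unfolding f_def g_def using y dn by auto
        fix h assume "h \<in> {0..<d}"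
        then show "f (g y) h = y h" unfolding f_def g_def using dn by auto
      qed
    qed
    show "f ` Q \<subseteq> {0..<d} \<rightarrow>\<^sub>E A" unfolding f_def Q_def using configs_in dn by fastforce
    show "g ` ({0..<d} \<rightarrow>\<^sub>E A) \<subseteq> Q"
    proof
      fix z assume "z \<in> g ` ({0..<d} \<rightarrow>\<^sub>E A)"
      then obtain y where y: "y \<in> {0..<d} \<rightarrow>\<^sub>E A" and z: "z = g y" by auto
      have zc: "z \<in> configs n A" unfolding z g_def configs_def using y d0 by auto
      have "sh n d z = z"
      proof (rule configs_eqI[OF sh_in[OF n zc] zc])
        fix h assume h: "h < n"
        have "((h + d) mod n) mod d = (h + d) mod d" using d by (simp add: mod_mod_cancel)
        then show "sh n d z h = z h" unfolding sh_def z g_def using h n by simp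
      qed
      then show "z \<in> Q" using zc Q_def by simp
    qed
  qed
  have "card Q = card ({0..<d} \<rightarrow>\<^sub>E A)" using bij_betw_same_card[OF b] .
  also have "\<dots> = card A ^ d" by (simp add: card_PiE)
  finally show ?thesis unfolding Q_def .
qed



lemma card_fix_sum:
  assumes n: "n > 0" and A: "finite A" and d: "d dvd n"
  shows "card A ^ d = (\<Sum>b\<in>{b. b dvd d}. card (P n A b))"
proof -
  have d0: "d > 0" using d n by (metis dvd_0_left_iff gr0I)
  have "{x \<in> configs n A. sh n d x = x} = (\<Union>b\<in>{b. b dvd d}. P n A b)"
    unfolding P_def using sh_fix_iff[OF n] by auto
  moreover have "card (\<Union>b\<in>{b. b dvd d}. P n A b) = (\<Sum>b\<in>{b. b dvd d}. card (P n A b))"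
    by (rule card_UN_disjoint) (use d0 finite_configs[OF A] in \<open>auto simp: P_def\<close>)
  ultimately show ?thesis using card_fix[OF n A d] by simp
qed

lemma alpha_card:
  assumes n: "n > 0" and A: "finite A" and d: "d dvd n"
  shows "alpha d (card A) = card (R n A d)"
proof -
  have d0: "d > 0" using d n by (metis dvd_0_left_iff gr0I)
  have "(\<Sum>b\<in>{b. b dvd d}. moebius (d div b) * int (card A) ^ b) = int (card (P n A d))"
  proof (rule moebius_inversion[OF d0])
    fix m assume "m dvd d"
    then have "m dvd n" using d by (rule dvd_trans)
    then show "int (card A) ^ m = (\<Sum>c\<in>{c. c dvd m}. int (card (P n A c)))"
      using card_fix_sum[OF n A] by (metis of_nat_power of_nat_sum)
  qed
  then show ?thesis unfolding alpha_def using card_P[OF n A] d0 by simp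
qed

definition Y :: "nat \<Rightarrow> nat \<Rightarrow> (nat \<times> nat \<times> nat) set" where
  "Y n q = {(d, j, k). d dvd n \<and> j \<in> {1..alpha d q} \<and> k < d}"

lemma param_exists:
  assumes n: "n > 0" and A: "finite A"
  shows "\<exists>\<beta>. bij_betw \<beta> (Y n (card A)) (configs n A) \<and>
     (\<forall>d j k g. (d, j, k) \<in> Y n (card A) \<longrightarrow> sh n g (\<beta> (d, j, k)) = \<beta> (d, j, (k + g) mod d))"
proof -
  have "\<forall>d. \<exists>e. d dvd n \<longrightarrow> bij_betw e {1..alpha d (card A)} (R n A d)"
  proof
    fix d
    show "\<exists>e. d dvd n \<longrightarrow> bij_betw e {1..alpha d (card A)} (R n A d)"
    proof (cases "d dvd n")
      case True
      have "finite (R n A d)" using finite_configs[OF A] R_props(1)[OF n] by (meson finite_subset subsetI)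
      then obtain h where h: "bij_betw h {0..<card (R n A d)} (R n A d)"
        using ex_bij_betw_nat_finite by blast
      have "bij_betw (\<lambda>j. j - 1) {1..card (R n A d)} {0..<card (R n A d)}"
        by (rule bij_betw_byWitness[where f'="\<lambda>j. j + 1"]) auto
      then have "bij_betw (h \<circ> (\<lambda>j. j - 1)) {1..card (R n A d)} (R n A d)"
        using h by (rule bij_betw_trans)
      then show ?thesis using alpha_card[OF n A True] by metis
    qed simp
  qed
  then obtain e where e: "\<And>d. d dvd n \<Longrightarrow> bij_betw (e d) {1..alpha d (card A)} (R n A d)"
    by metis
  define \<beta> where "\<beta> = (\<lambda>(d, j, k). sh n k (e d j))"
  have eR: "\<And>d j. d dvd n \<Longrightarrow> j \<in> {1..alpha d (card A)} \<Longrightarrow> e d j \<in> R n A d"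
    using e bij_betwE by blast
  have perb: "\<And>d j k. (d, j, k) \<in> Y n (card A) \<Longrightarrow> per n (\<beta> (d, j, k)) = d"
  proof -
    fix d j k assume "(d, j, k) \<in> Y n (card A)"
    then have r: "e d j \<in> R n A d" using eR unfolding Y_def by auto
    show "per n (\<beta> (d, j, k)) = d" unfolding \<beta>_def
      using per_sh[OF n R_props(1)[OF n r]] R_props(2)[OF n r] by simp
  qed
  have inj: "inj_on \<beta> (Y n (card A))"
  proof (rule inj_onI)
    fix y y' assume y: "y \<in> Y n (card A)" and y': "y' \<in> Y n (card A)" and eq: "\<beta> y = \<beta> y'"
    obtain d j k where yy: "y = (d, j, k)" by (cases y) auto
    obtain d' j' k' where yy': "y' = (d', j', k')" by (cases y') auto
    have "d = per n (\<beta> y)" using perb y yy by simp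
    moreover have "d' = per n (\<beta> y')" using perb y' yy' by simp
    ultimately have "d = d'" using eq by simp
    then have dd: "d dvd n" "j \<in> {1..alpha d (card A)}" "k < d" "j' \<in> {1..alpha d (card A)}" "k' < d"
      using y y' yy yy' unfolding Y_def by auto
    have "(\<lambda>(r, k). sh n k r) (e d j, k) = (\<lambda>(r, k). sh n k r) (e d j', k')"
      using eq yy yy' \<open>d = d'\<close> unfolding \<beta>_def by simp
    then have "(e d j, k) = (e d j', k')"
      by (rule inj_onD[OF bij_betw_imp_inj_on[OF bij_RP[OF n, of A d]]])
         (use eR[OF dd(1) dd(2)] eR[OF dd(1) dd(4)] dd in auto)
    then have "e d j = e d j'" "k = k'" by auto
    then have "j = j'" "k = k'"
      using inj_onD[OF bij_betw_imp_inj_on[OF e[OF dd(1)]] _ dd(2) dd(4)] by auto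
    then show "y = y'" using yy yy' \<open>d = d'\<close> by simp
  qed
  have img: "\<beta> ` Y n (card A) = configs n A"
  proof
    show "\<beta> ` Y n (card A) \<subseteq> configs n A"
    proof clarify
      fix d j k assume "(d, j, k) \<in> Y n (card A)"
      then have r: "e d j \<in> R n A d" using eR unfolding Y_def by auto
      show "\<beta> (d, j, k) \<in> configs n A" unfolding \<beta>_def using sh_in[OF n R_props(1)[OF n r]] by simp
    qed
  next
    show "configs n A \<subseteq> \<beta> ` Y n (card A)"
    proof
      fix x assume x: "x \<in> configs n A"
      define d where "d = per n x"
      have dn: "d dvd n" using per_dvd_n[OF n x] d_def by simp
      have "x \<in> P n A d" using x d_def unfolding P_def by simp
      then have "x \<in> (\<lambda>(r, k). sh n k r) ` (R n A d \<times> {0..<d})"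
        using bij_betw_imp_surj_on[OF bij_RP[OF n, of A d]] by simp
      then obtain r k where rk: "r \<in> R n A d" "k < d" "x = sh n k r" by auto
      obtain j where j: "j \<in> {1..alpha d (card A)}" "r = e d j"
        using bij_betw_imp_surj_on[OF e[OF dn]] rk(1) by (metis imageE)
      have "(d, j, k) \<in> Y n (card A)" using dn j rk unfolding Y_def by simp
      moreover have "x = \<beta> (d, j, k)" using rk j unfolding \<beta>_def by simp
      ultimately show "x \<in> \<beta> ` Y n (card A)" by blast
    qed
  qed
  have compat: "\<forall>d j k g. (d, j, k) \<in> Y n (card A) \<longrightarrow> sh n g (\<beta> (d, j, k)) = \<beta> (d, j, (k + g) mod d)"
  proof (intro allI impI)
    fix d j k g assume y: "(d, j, k) \<in> Y n (card A)"
    then have r: "e d j \<in> R n A d" using eR unfolding Y_def by auto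
    have "sh n g (\<beta> (d, j, k)) = sh n (k + g) (e d j)" unfolding \<beta>_def using n by (simp add: sh_sh)
    also have "\<dots> = sh n ((k + g) mod d) (e d j)"
      using sh_mod_per[OF n R_props(1)[OF n r]] R_props(2)[OF n r] by simp
    finally show "sh n g (\<beta> (d, j, k)) = \<beta> (d, j, (k + g) mod d)" unfolding \<beta>_def by simp
  qed
  show ?thesis using inj img compat unfolding bij_betw_def by blast
qed



lemma is_CA_iff:
  assumes n: "n > 0"
  shows "is_CA n A \<tau> \<longleftrightarrow> \<tau> \<in> configs n A \<rightarrow>\<^sub>E configs n A \<and>
           (\<forall>x\<in>configs n A. \<forall>g. sh n g (\<tau> x) = \<tau> (sh n g x))"
proof
  assume ca: "is_CA n A \<tau>"
  then have t: "\<tau> \<in> configs n A \<rightarrow>\<^sub>E configs n A" unfolding is_CA_def by simp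
  obtain S \<mu> where S: "S \<subseteq> {0..<n}" and
    eq: "\<forall>x\<in>configs n A. \<forall>g\<in>{0..<n}. \<tau> x g = \<mu> (restrict (\<lambda>h. x ((h + g) mod n)) S)"
    using ca unfolding is_CA_def by blast
  have "\<forall>x\<in>configs n A. \<forall>g. sh n g (\<tau> x) = \<tau> (sh n g x)"
  proof (intro ballI allI)
    fix x g assume x: "x \<in> configs n A"
    have tx: "\<tau> x \<in> configs n A" using t x by auto
    have sx: "sh n g x \<in> configs n A" using sh_in[OF n x] .
    have tsx: "\<tau> (sh n g x) \<in> configs n A" using t sx by auto
    show "sh n g (\<tau> x) = \<tau> (sh n g x)"
    proof (rule configs_eqI[OF sh_in[OF n tx] tsx])
      fix h assume h: "h < n"
      have "sh n g (\<tau> x) h = \<tau> x ((h + g) mod n)" unfolding sh_def using h by simp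
      also have "\<dots> = \<mu> (restrict (\<lambda>i. x ((i + (h + g) mod n) mod n)) S)"
        using eq x n by simp
      also have "(\<lambda>i. x ((i + (h + g) mod n) mod n)) = (\<lambda>i. sh n g x ((i + h) mod n))"
        unfolding sh_def using n by (auto simp: fun_eq_iff mod_add_left_eq mod_add_right_eq add.assoc)
      also have "\<mu> (restrict (\<lambda>i. sh n g x ((i + h) mod n)) S) = \<tau> (sh n g x) h"
        using eq sx h by simp
      finally show "sh n g (\<tau> x) h = \<tau> (sh n g x) h" .
    qed
  qed
  then show "\<tau> \<in> configs n A \<rightarrow>\<^sub>E configs n A \<and> (\<forall>x\<in>configs n A. \<forall>g. sh n g (\<tau> x) = \<tau> (sh n g x))"
    using t by simp
next
  assume a: "\<tau> \<in> configs n A \<rightarrow>\<^sub>E configs n A \<and> (\<forall>x\<in>configs n A. \<forall>g. sh n g (\<tau> x) = \<tau> (sh n g x))"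
  define \<mu> where "\<mu> = (\<lambda>y. \<tau> y 0)"
  have "\<mu> \<in> ({0..<n} \<rightarrow>\<^sub>E A) \<rightarrow> A"
  proof
    fix y assume "y \<in> {0..<n} \<rightarrow>\<^sub>E A"
    then have "\<tau> y \<in> configs n A" using a unfolding configs_def by auto
    then show "\<mu> y \<in> A" unfolding \<mu>_def using configs_in n by blast
  qed
  moreover have "\<forall>x\<in>configs n A. \<forall>g\<in>{0..<n}. \<tau> x g = \<mu> (restrict (\<lambda>h. x ((h + g) mod n)) {0..<n})"
  proof (intro ballI)
    fix x g assume x: "x \<in> configs n A" and g: "g \<in> {0..<n}"
    have "restrict (\<lambda>h. x ((h + g) mod n)) {0..<n} = sh n g x" unfolding sh_def by simp
    moreover have "\<tau> (sh n g x) 0 = sh n g (\<tau> x) 0" using a x by simp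
    moreover have "sh n g (\<tau> x) 0 = \<tau> x g" unfolding sh_def using n g by simp
    ultimately show "\<tau> x g = \<mu> (restrict (\<lambda>h. x ((h + g) mod n)) {0..<n})" unfolding \<mu>_def by simp
  qed
  ultimately show "is_CA n A \<tau>" unfolding is_CA_def using a by blast
qed

lemma CA_mult: "\<tau> \<otimes>\<^bsub>CA_monoid n A\<^esub> \<sigma> = (\<lambda>x\<in>configs n A. \<sigma> (\<tau> x))"
  by (simp add: CA_monoid_def)

lemma CA_one: "one (CA_monoid n A) = (\<lambda>x\<in>configs n A. x)"
  by (simp add: CA_monoid_def)

lemma restrict_eq_id: "(\<lambda>z\<in>S. F z) = (\<lambda>z\<in>S. z) \<Longrightarrow> y \<in> S \<Longrightarrow> F y = y"
  by (metis restrict_apply')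

lemma Units_CA:
  assumes n: "n > 0"
  shows "Units (CA_monoid n A) = {\<tau>. is_CA n A \<tau> \<and> bij_betw \<tau> (configs n A) (configs n A)}"
proof
  show "Units (CA_monoid n A) \<subseteq> {\<tau>. is_CA n A \<tau> \<and> bij_betw \<tau> (configs n A) (configs n A)}"
  proof
    fix \<tau> assume "\<tau> \<in> Units (CA_monoid n A)"
    then obtain \<tau>' where t: "is_CA n A \<tau>" and t': "is_CA n A \<tau>'"
      and e1: "(\<lambda>x\<in>configs n A. \<tau> (\<tau>' x)) = (\<lambda>x\<in>configs n A. x)"
      and e2: "(\<lambda>x\<in>configs n A. \<tau>' (\<tau> x)) = (\<lambda>x\<in>configs n A. x)"
      unfolding Units_def by (auto simp: CA_monoid_def)
    have m: "\<tau> \<in> configs n A \<rightarrow> configs n A" "\<tau>' \<in> configs n A \<rightarrow> configs n A"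
      using t t' unfolding is_CA_def by auto
    have "bij_betw \<tau> (configs n A) (configs n A)"
      by (rule bij_betw_byWitness[where f'=\<tau>'])
         (use restrict_eq_id[OF e1] restrict_eq_id[OF e2] m in auto)
    then show "\<tau> \<in> {\<tau>. is_CA n A \<tau> \<and> bij_betw \<tau> (configs n A) (configs n A)}" using t by simp
  qed
next
  show "{\<tau>. is_CA n A \<tau> \<and> bij_betw \<tau> (configs n A) (configs n A)} \<subseteq> Units (CA_monoid n A)"
  proof
    fix \<tau> assume "\<tau> \<in> {\<tau>. is_CA n A \<tau> \<and> bij_betw \<tau> (configs n A) (configs n A)}"
    then have t: "is_CA n A \<tau>" and b: "bij_betw \<tau> (configs n A) (configs n A)" by auto
    note tt = t[unfolded is_CA_iff[OF n]]
    define \<tau>' where "\<tau>' = (\<lambda>y\<in>configs n A. inv_into (configs n A) \<tau> y)"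
    have bi: "bij_betw (inv_into (configs n A) \<tau>) (configs n A) (configs n A)"
      using bij_betw_inv_into[OF b] .
    have tin: "\<And>y. y \<in> configs n A \<Longrightarrow> \<tau>' y \<in> configs n A" unfolding \<tau>'_def using bi bij_betwE by fastforce
    have f1: "\<And>y. y \<in> configs n A \<Longrightarrow> \<tau> (\<tau>' y) = y" unfolding \<tau>'_def
      using b by (simp add: bij_betw_inv_into_right)
    have f2: "\<And>x. x \<in> configs n A \<Longrightarrow> \<tau>' (\<tau> x) = x" unfolding \<tau>'_def
      using b bij_betwE[OF b] by (simp add: bij_betw_inv_into_left)
    have "is_CA n A \<tau>'"
      unfolding is_CA_iff[OF n]
    proof (intro conjI ballI allI)
      show "\<tau>' \<in> configs n A \<rightarrow>\<^sub>E configs n A" using tin unfolding \<tau>'_def by auto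
    next
      fix y g assume y: "y \<in> configs n A"
      have "\<tau> (sh n g (\<tau>' y)) = sh n g (\<tau> (\<tau>' y))" using tt tin[OF y] by simp
      also have "\<dots> = sh n g y" using f1[OF y] by simp
      finally have "\<tau>' (\<tau> (sh n g (\<tau>' y))) = \<tau>' (sh n g y)" by simp
      then show "sh n g (\<tau>' y) = \<tau>' (sh n g y)" using f2[OF sh_in[OF n tin[OF y]]] by simp
    qed
    moreover have "monoid.mult (CA_monoid n A) \<tau>' \<tau> = one (CA_monoid n A)"
      unfolding CA_mult CA_one using f1 by (auto intro: restrict_ext)
    moreover have "monoid.mult (CA_monoid n A) \<tau> \<tau>' = one (CA_monoid n A)"
      unfolding CA_mult CA_one using f2 by (auto intro: restrict_ext)
    ultimately show "\<tau> \<in> Units (CA_monoid n A)" unfolding Units_def using t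
      by (auto simp: CA_monoid_def)
  qed
qed



lemma alpha_1: "alpha 1 q = q"
proof -
  have "{b. b dvd (1::nat)} = {1}" by auto
  then show ?thesis unfolding alpha_def by (simp add: moebius_def)
qed

definition eqv :: "nat \<Rightarrow> 'a set \<Rightarrow> ((nat \<Rightarrow> 'a) \<Rightarrow> (nat \<Rightarrow> 'a)) \<Rightarrow> bool" where
  "eqv n A \<tau> \<longleftrightarrow> \<tau> \<in> configs n A \<rightarrow> configs n A \<and> (\<forall>x\<in>configs n A. \<forall>g. sh n g (\<tau> x) = \<tau> (sh n g x))"

lemma unit_props:
  assumes n: "n > 0" and t: "\<tau> \<in> Units (CA_monoid n A)"
  shows "eqv n A \<tau>" "\<exists>\<tau>'\<in>Units (CA_monoid n A). (\<lambda>x\<in>configs n A. \<tau>' (\<tau> x)) = (\<lambda>x\<in>configs n A. x)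
            \<and> (\<lambda>x\<in>configs n A. \<tau> (\<tau>' x)) = (\<lambda>x\<in>configs n A. x)"
proof -
  show "eqv n A \<tau>" using t is_CA_iff[OF n] unfolding Units_def eqv_def by (auto simp: CA_monoid_def)
  obtain \<tau>' where t': "\<tau>' \<in> carrier (CA_monoid n A)"
    "monoid.mult (CA_monoid n A) \<tau>' \<tau> = one (CA_monoid n A)"
    "monoid.mult (CA_monoid n A) \<tau> \<tau>' = one (CA_monoid n A)"
    using t unfolding Units_def by auto
  have "\<tau>' \<in> Units (CA_monoid n A)" using t' t unfolding Units_def by auto
  then show "\<exists>\<tau>'\<in>Units (CA_monoid n A). (\<lambda>x\<in>configs n A. \<tau>' (\<tau> x)) = (\<lambda>x\<in>configs n A. x)
            \<and> (\<lambda>x\<in>configs n A. \<tau> (\<tau>' x)) = (\<lambda>x\<in>configs n A. x)"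
    using t'(2,3) unfolding CA_mult CA_one by blast
qed

locale param =
  fixes n :: nat and A :: "'a set" and \<beta> :: "nat \<times> nat \<times> nat \<Rightarrow> nat \<Rightarrow> 'a"
  assumes n0: "n > 0" and finA: "finite A"
    and bij: "bij_betw \<beta> (Y n (card A)) (configs n A)"
    and compat: "\<And>d j k g. (d, j, k) \<in> Y n (card A) \<Longrightarrow> sh n g (\<beta> (d, j, k)) = \<beta> (d, j, (k + g) mod d)"
begin

definition bi where "bi = inv_into (Y n (card A)) \<beta>"
definition D where "D \<tau> d j = bi (\<tau> (\<beta> (d, j, 0)))"
definition ps where "ps \<tau> d j = (if j \<in> {1..alpha d (card A)} then fst (snd (D \<tau> d j)) else j)"
definition vv where "vv \<tau> d = (\<lambda>j\<in>{1..alpha d (card A)}. snd (snd (D \<tau> d j)))"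
definition Phi where
  "Phi \<tau> = ((\<lambda>d\<in>{d. d dvd n \<and> d \<noteq> 1}. (vv \<tau> d, Hilbert_Choice.inv (ps \<tau> d))), Hilbert_Choice.inv (ps \<tau> 1))"

lemma Y_mem: "(d, j, k) \<in> Y n (card A) \<longleftrightarrow> d dvd n \<and> j \<in> {1..alpha d (card A)} \<and> k < d"
  by (simp add: Y_def)

lemma dvd_pos: "d dvd n \<Longrightarrow> d > 0"
  using n0 by (metis dvd_0_left_iff gr0I)

lemma Y0: "(d, j, k) \<in> Y n (card A) \<Longrightarrow> (d, j, 0) \<in> Y n (card A)"
  using dvd_pos by (auto simp: Y_mem)

lemma Y_d0: "(d, j, k) \<in> Y n (card A) \<Longrightarrow> d > 0"
  using dvd_pos by (auto simp: Y_mem)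

lemma \<beta>_in: "y \<in> Y n (card A) \<Longrightarrow> \<beta> y \<in> configs n A"
  using bij bij_betwE by blast

lemma bi_in: "x \<in> configs n A \<Longrightarrow> bi x \<in> Y n (card A)"
  unfolding bi_def using bij_betwE[OF bij_betw_inv_into[OF bij]] by blast

lemma \<beta>_bi: "x \<in> configs n A \<Longrightarrow> \<beta> (bi x) = x"
  unfolding bi_def using bij by (simp add: bij_betw_inv_into_right)

lemma bi_\<beta>: "y \<in> Y n (card A) \<Longrightarrow> bi (\<beta> y) = y"
  unfolding bi_def using bij by (simp add: bij_betw_inv_into_left)

lemma \<beta>_inj: "y \<in> Y n (card A) \<Longrightarrow> y' \<in> Y n (card A) \<Longrightarrow> \<beta> y = \<beta> y' \<Longrightarrow> y = y'"
  using bi_\<beta> by metis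

lemma \<beta>_sh: "(d, j, k) \<in> Y n (card A) \<Longrightarrow> \<beta> (d, j, k) = sh n k (\<beta> (d, j, 0))"
  using compat[OF Y0, of d j k k] by (simp add: Y_mem)

lemma D_in:
  assumes t: "eqv n A \<tau>" and y: "(d, j, 0) \<in> Y n (card A)"
  shows "D \<tau> d j \<in> Y n (card A)" "\<beta> (D \<tau> d j) = \<tau> (\<beta> (d, j, 0))"
proof -
  have "\<tau> (\<beta> (d, j, 0)) \<in> configs n A" using t \<beta>_in[OF y] unfolding eqv_def by auto
  then show "D \<tau> d j \<in> Y n (card A)" "\<beta> (D \<tau> d j) = \<tau> (\<beta> (d, j, 0))"
    unfolding D_def using bi_in \<beta>_bi by auto
qed

lemma D_comp:
  assumes t: "eqv n A \<tau>" and s: "eqv n A \<sigma>" and y: "(d, j, 0) \<in> Y n (card A)"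
    and D1: "D \<tau> d j = (d1, j1, k1)" and D2: "D \<sigma> d1 j1 = (d2, j2, k2)"
  shows "D (\<lambda>x\<in>configs n A. \<sigma> (\<tau> x)) d j = (d2, j2, (k1 + k2) mod d2)"
proof -
  have y1: "(d1, j1, k1) \<in> Y n (card A)" using D_in(1)[OF t y] D1 by simp
  then have y10: "(d1, j1, 0) \<in> Y n (card A)" by (rule Y0)
  have y2: "(d2, j2, k2) \<in> Y n (card A)" using D_in(1)[OF s y10] D2 by simp
  have y3: "(d2, j2, (k1 + k2) mod d2) \<in> Y n (card A)"
    using y2 Y_d0[OF y2] by (simp add: Y_mem)
  have "(\<lambda>x\<in>configs n A. \<sigma> (\<tau> x)) (\<beta> (d, j, 0)) = \<sigma> (\<tau> (\<beta> (d, j, 0)))"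
    using \<beta>_in[OF y] by simp
  also have "\<tau> (\<beta> (d, j, 0)) = \<beta> (d1, j1, k1)" using D_in(2)[OF t y] D1 by simp
  also have "\<dots> = sh n k1 (\<beta> (d1, j1, 0))" using \<beta>_sh[OF y1] .
  also have "\<sigma> \<dots> = sh n k1 (\<sigma> (\<beta> (d1, j1, 0)))" using s \<beta>_in[OF y10] unfolding eqv_def by simp
  also have "\<sigma> (\<beta> (d1, j1, 0)) = \<beta> (d2, j2, k2)" using D_in(2)[OF s y10] D2 by simp
  also have "sh n k1 \<dots> = \<beta> (d2, j2, (k2 + k1) mod d2)" using compat[OF y2] .
  finally show ?thesis unfolding D_def using bi_\<beta>[OF y3] by (simp add: add.commute)
qed

lemma D_id:
  assumes y: "(d, j, 0) \<in> Y n (card A)"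
  shows "D (\<lambda>x\<in>configs n A. x) d j = (d, j, 0)"
  unfolding D_def using \<beta>_in[OF y] bi_\<beta>[OF y] by simp

lemma D_dvd:
  assumes t: "eqv n A \<tau>" and y: "(d, j, 0) \<in> Y n (card A)" and D1: "D \<tau> d j = (d1, j1, k1)"
  shows "d1 dvd d"
proof -
  have y1: "(d1, j1, k1) \<in> Y n (card A)" using D_in(1)[OF t y] D1 by simp
  have "sh n d (\<beta> (d, j, 0)) = \<beta> (d, j, 0)" using compat[OF y, of d] by simp
  then have "sh n d (\<tau> (\<beta> (d, j, 0))) = \<tau> (\<beta> (d, j, 0))"
    using t \<beta>_in[OF y] unfolding eqv_def by metis
  then have "sh n d (\<beta> (d1, j1, k1)) = \<beta> (d1, j1, k1)" using D_in(2)[OF t y] D1 by simp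
  then have "\<beta> (d1, j1, (k1 + d) mod d1) = \<beta> (d1, j1, k1)" using compat[OF y1] by simp
  moreover have "(d1, j1, (k1 + d) mod d1) \<in> Y n (card A)" using y1 Y_d0[OF y1] by (simp add: Y_mem)
  ultimately have "(k1 + d) mod d1 = k1" using \<beta>_inj y1 by blast
  then have "(k1 + d) mod d1 = k1 mod d1" using y1 by (simp add: Y_mem)
  then show "d1 dvd d" by (metis add_diff_cancel_left' le_add1 mod_eq_dvd_iff_nat)
qed

lemma D_unit:
  assumes t: "\<tau> \<in> Units (CA_monoid n A)" and y: "(d, j, 0) \<in> Y n (card A)"
  shows "fst (D \<tau> d j) = d"
proof -
  note tp = unit_props[OF n0 t]
  obtain \<tau>' where t': "\<tau>' \<in> Units (CA_monoid n A)" and e: "(\<lambda>x\<in>configs n A. \<tau>' (\<tau> x)) = (\<lambda>x\<in>configs n A. x)"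
    using tp(2) by blast
  note tp' = unit_props[OF n0 t']
  obtain d1 j1 k1 where D1: "D \<tau> d j = (d1, j1, k1)" by (metis prod_cases3)
  have y10: "(d1, j1, 0) \<in> Y n (card A)" using Y0 D_in(1)[OF tp(1) y] D1 by simp
  obtain d2 j2 k2 where D2: "D \<tau>' d1 j1 = (d2, j2, k2)" by (metis prod_cases3)
  have "D (\<lambda>x\<in>configs n A. \<tau>' (\<tau> x)) d j = (d2, j2, (k1 + k2) mod d2)"
    by (rule D_comp[OF tp(1) tp'(1) y D1 D2])
  then have "d2 = d" using e D_id[OF y] by simp
  moreover have "d1 dvd d" by (rule D_dvd[OF tp(1) y D1])
  moreover have "d2 dvd d1" by (rule D_dvd[OF tp'(1) y10 D2])
  ultimately show ?thesis using D1 by (simp add: dvd_antisym)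
qed

lemma D_unit_eq:
  assumes t: "\<tau> \<in> Units (CA_monoid n A)" and d: "d dvd n" and j: "j \<in> {1..alpha d (card A)}"
  shows "D \<tau> d j = (d, ps \<tau> d j, vv \<tau> d j)" "ps \<tau> d j \<in> {1..alpha d (card A)}" "vv \<tau> d j < d"
proof -
  have y: "(d, j, 0) \<in> Y n (card A)" using d j dvd_pos by (simp add: Y_mem)
  have yy: "D \<tau> d j \<in> Y n (card A)" using D_in(1)[OF unit_props(1)[OF n0 t] y] .
  have f: "fst (D \<tau> d j) = d" by (rule D_unit[OF t y])
  obtain a b c where abc: "D \<tau> d j = (a, b, c)" by (metis prod_cases3)
  then show "D \<tau> d j = (d, ps \<tau> d j, vv \<tau> d j)" using f j unfolding ps_def vv_def by simp
  show "ps \<tau> d j \<in> {1..alpha d (card A)}" "vv \<tau> d j < d"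
    using yy abc f j unfolding ps_def vv_def by (auto simp: Y_mem)
qed

end



context param begin

lemma ps_out: "j \<notin> {1..alpha d (card A)} \<Longrightarrow> ps \<tau> d j = j"
  unfolding ps_def by auto

lemma comp_formula:
  assumes t: "\<tau> \<in> Units (CA_monoid n A)" and s: "\<sigma> \<in> Units (CA_monoid n A)"
    and d: "d dvd n" and j: "j \<in> {1..alpha d (card A)}"
  shows "D (\<lambda>x\<in>configs n A. \<sigma> (\<tau> x)) d j
           = (d, ps \<sigma> d (ps \<tau> d j), (vv \<tau> d j + vv \<sigma> d (ps \<tau> d j)) mod d)"
proof -
  have y: "(d, j, 0) \<in> Y n (card A)" using d j dvd_pos by (simp add: Y_mem)
  note e1 = D_unit_eq[OF t d j]
  note e2 = D_unit_eq[OF s d e1(2)]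
  show ?thesis by (rule D_comp[OF unit_props(1)[OF n0 t] unit_props(1)[OF n0 s] y e1(1) e2(1)])
qed

lemma ps_comp:
  assumes t: "\<tau> \<in> Units (CA_monoid n A)" and s: "\<sigma> \<in> Units (CA_monoid n A)" and d: "d dvd n"
  shows "ps (\<lambda>x\<in>configs n A. \<sigma> (\<tau> x)) d = ps \<sigma> d \<circ> ps \<tau> d"
proof
  fix j show "ps (\<lambda>x\<in>configs n A. \<sigma> (\<tau> x)) d j = (ps \<sigma> d \<circ> ps \<tau> d) j"
  proof (cases "j \<in> {1..alpha d (card A)}")
    case True
    then show ?thesis using comp_formula[OF t s d True] unfolding ps_def[of "\<lambda>x\<in>configs n A. \<sigma> (\<tau> x)"]
      by simp
  next
    case False
    then show ?thesis by (simp add: ps_out)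
  qed
qed

lemma vv_comp:
  assumes t: "\<tau> \<in> Units (CA_monoid n A)" and s: "\<sigma> \<in> Units (CA_monoid n A)" and d: "d dvd n"
  shows "vv (\<lambda>x\<in>configs n A. \<sigma> (\<tau> x)) d
           = (\<lambda>j\<in>{1..alpha d (card A)}. (vv \<tau> d j + vv \<sigma> d (ps \<tau> d j)) mod d)"
  unfolding vv_def[of "\<lambda>x\<in>configs n A. \<sigma> (\<tau> x)"] using comp_formula[OF t s d]
  by (intro restrict_ext) simp

lemma ps_permutes:
  assumes t: "\<tau> \<in> Units (CA_monoid n A)" and d: "d dvd n"
  shows "ps \<tau> d permutes {1..alpha d (card A)}"
proof (rule bij_imp_permutes)
  obtain \<tau>' where t': "\<tau>' \<in> Units (CA_monoid n A)"
    and e1: "(\<lambda>x\<in>configs n A. \<tau>' (\<tau> x)) = (\<lambda>x\<in>configs n A. x)"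
    and e2: "(\<lambda>x\<in>configs n A. \<tau> (\<tau>' x)) = (\<lambda>x\<in>configs n A. x)"
    using unit_props(2)[OF n0 t] by blast
  have i1: "ps \<tau>' d (ps \<tau> d j) = j" if j: "j \<in> {1..alpha d (card A)}" for j
  proof -
    have y: "(d, j, 0) \<in> Y n (card A)" using d j dvd_pos by (simp add: Y_mem)
    show ?thesis using comp_formula[OF t t' d j] e1 D_id[OF y] by simp
  qed
  have i2: "ps \<tau> d (ps \<tau>' d j) = j" if j: "j \<in> {1..alpha d (card A)}" for j
  proof -
    have y: "(d, j, 0) \<in> Y n (card A)" using d j dvd_pos by (simp add: Y_mem)
    show ?thesis using comp_formula[OF t' t d j] e2 D_id[OF y] by simp
  qed
  show "bij_betw (ps \<tau> d) {1..alpha d (card A)} {1..alpha d (card A)}"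
    by (rule bij_betw_byWitness[where f'="ps \<tau>' d"])
       (use i1 i2 D_unit_eq(2)[OF t d] D_unit_eq(2)[OF t' d] in auto)
  show "\<And>x. x \<notin> {1..alpha d (card A)} \<Longrightarrow> ps \<tau> d x = x" by (rule ps_out)
qed

end



lemma wreath_carrier: "carrier (wreath d a) = ({1..a} \<rightarrow>\<^sub>E {0..<d}) \<times> {\<phi>. \<phi> permutes {1..a}}"
  by (simp add: wreath_def)

lemma wreath_mult: "monoid.mult (wreath d a) (v, \<phi>) (w, \<psi>) =
   ((\<lambda>i\<in>{1..a}. (v i + w (Hilbert_Choice.inv \<phi> i)) mod d), \<phi> \<circ> \<psi>)"
  by (simp add: wreath_def)

lemma product_group_mult: "monoid.mult (product_group I G) x y = (\<lambda>i\<in>I. monoid.mult (G i) (x i) (y i))"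
  by (simp add: product_group_def)

lemma DirProd_mult: "monoid.mult (G \<times>\<times> H) (a, b) (c, d) = (monoid.mult G a c, monoid.mult H b d)"
  by (simp add: DirProd_def)

context param begin

lemma Phi_in:
  assumes t: "\<tau> \<in> Units (CA_monoid n A)"
  shows "Phi \<tau> \<in> carrier (DirProd (product_group {d. d dvd n \<and> d \<noteq> 1} (\<lambda>d. wreath d (alpha d (card A))))
                   (sym_group (card A)))"
proof -
  have w: "(vv \<tau> d, Hilbert_Choice.inv (ps \<tau> d)) \<in> carrier (wreath d (alpha d (card A)))" if d: "d dvd n" for d
    unfolding wreath_carrier using D_unit_eq(3)[OF t d] permutes_inv[OF ps_permutes[OF t d]]
    unfolding vv_def by auto
  have s: "Hilbert_Choice.inv (ps \<tau> 1) permutes {1..card A}"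
    using permutes_inv[OF ps_permutes[OF t, of 1]] alpha_1 by simp
  show ?thesis unfolding Phi_def DirProd_def using w s by (auto simp: sym_group_def)
qed

lemma Phi_hom:
  assumes t: "\<tau> \<in> Units (CA_monoid n A)" and s: "\<sigma> \<in> Units (CA_monoid n A)"
  shows "Phi (monoid.mult (CA_monoid n A) \<tau> \<sigma>) = monoid.mult (DirProd (product_group {d. d dvd n \<and> d \<noteq> 1}
       (\<lambda>d. wreath d (alpha d (card A)))) (sym_group (card A))) (Phi \<tau>) (Phi \<sigma>)"
proof -
  have bt: "bij (ps \<tau> d)" and bs: "bij (ps \<sigma> d)" if "d dvd n" for d
    using permutes_bij[OF ps_permutes[OF t that]] permutes_bij[OF ps_permutes[OF s that]] by auto
  have inv_comp: "Hilbert_Choice.inv (ps (\<lambda>x\<in>configs n A. \<sigma> (\<tau> x)) d)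
      = Hilbert_Choice.inv (ps \<tau> d) \<circ> Hilbert_Choice.inv (ps \<sigma> d)" if d: "d dvd n" for d
    using ps_comp[OF t s d] o_inv_distrib[OF bs[OF d] bt[OF d]] by simp
  have comp1: "(vv (\<lambda>x\<in>configs n A. \<sigma> (\<tau> x)) d, Hilbert_Choice.inv (ps (\<lambda>x\<in>configs n A. \<sigma> (\<tau> x)) d))
     = monoid.mult (wreath d (alpha d (card A))) (vv \<tau> d, Hilbert_Choice.inv (ps \<tau> d))
                    (vv \<sigma> d, Hilbert_Choice.inv (ps \<sigma> d))" if d: "d dvd n" for d
    unfolding wreath_mult vv_comp[OF t s d] inv_comp[OF d] inv_inv_eq[OF bt[OF d]] by simp
  show ?thesis
    unfolding CA_mult Phi_def DirProd_mult product_group_mult sym_group_mult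
    using comp1 inv_comp[of 1] by (auto intro!: restrict_ext)
qed

lemma Phi_inj: "inj_on Phi (Units (CA_monoid n A))"
proof (rule inj_onI)
  fix \<tau> \<sigma> assume t: "\<tau> \<in> Units (CA_monoid n A)" and s: "\<sigma> \<in> Units (CA_monoid n A)"
    and e: "Phi \<tau> = Phi \<sigma>"
  note tp = unit_props(1)[OF n0 t] and sp = unit_props(1)[OF n0 s]
  have bt: "bij (ps \<tau> d)" and bs: "bij (ps \<sigma> d)" if "d dvd n" for d
    using permutes_bij[OF ps_permutes[OF t that]] permutes_bij[OF ps_permutes[OF s that]] by auto
  have eqD: "D \<tau> d j = D \<sigma> d j" if d: "d dvd n" and j: "j \<in> {1..alpha d (card A)}" for d j
  proof (cases "d = 1")
    case True
    have "Hilbert_Choice.inv (ps \<tau> 1) = Hilbert_Choice.inv (ps \<sigma> 1)" using e unfolding Phi_def by simp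
    then have "ps \<tau> 1 = ps \<sigma> 1" by (metis inv_inv_eq bt bs one_dvd)
    moreover have "vv \<tau> 1 j = 0" "vv \<sigma> 1 j = 0" using D_unit_eq(3)[OF t one_dvd] D_unit_eq(3)[OF s one_dvd]
      j True by auto
    ultimately show ?thesis using D_unit_eq(1)[OF t d j] D_unit_eq(1)[OF s d j] True by simp
  next
    case False
    then have "(vv \<tau> d, Hilbert_Choice.inv (ps \<tau> d)) = (vv \<sigma> d, Hilbert_Choice.inv (ps \<sigma> d))"
      using e d unfolding Phi_def by (metis (mono_tags, lifting) mem_Collect_eq prod.inject restrict_apply')
    then have "vv \<tau> d = vv \<sigma> d" "ps \<tau> d = ps \<sigma> d" by (auto, metis inv_inv_eq bt[OF d] bs[OF d])
    then show ?thesis using D_unit_eq(1)[OF t d j] D_unit_eq(1)[OF s d j] by simp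
  qed
  have "\<tau> x = \<sigma> x" if x: "x \<in> configs n A" for x
  proof -
    obtain d j k where y: "bi x = (d, j, k)" by (metis prod_cases3)
    have yy: "(d, j, k) \<in> Y n (card A)" using bi_in[OF x] y by simp
    have y0: "(d, j, 0) \<in> Y n (card A)" using Y0[OF yy] .
    have xx: "x = sh n k (\<beta> (d, j, 0))" using \<beta>_bi[OF x] y \<beta>_sh[OF yy] by simp
    have "\<tau> (\<beta> (d, j, 0)) = \<sigma> (\<beta> (d, j, 0))"
      using D_in(2)[OF tp y0] D_in(2)[OF sp y0] eqD yy by (simp add: Y_mem)
    then show ?thesis using xx tp sp \<beta>_in[OF y0] unfolding eqv_def by metis
  qed
  moreover have "\<tau> \<in> configs n A \<rightarrow>\<^sub>E configs n A" "\<sigma> \<in> configs n A \<rightarrow>\<^sub>E configs n A"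
    using t s unfolding Units_CA[OF n0] is_CA_def by auto
  ultimately show "\<tau> = \<sigma>" by (metis PiE_ext)
qed

end



lemma mod_add_cancel_lt:
  assumes k: "(k::nat) < d" and k': "k' < d" and e: "(k + c) mod d = (k' + c) mod d"
  shows "k = k'"
proof -
  have *: "a = b" if ab: "a \<le> b" "a < d" "b < d" "(a + c) mod d = (b + c) mod d" for a b :: nat
  proof -
    have "d dvd (b + c) - (a + c)" using ab(1,4) by (metis add_le_mono1 mod_eq_dvd_iff_nat)
    then have "d dvd b - a" by simp
    moreover have "b - a < d" using ab by simp
    ultimately have "b - a = 0" by (metis dvd_imp_le neq0_conv not_less)
    then show ?thesis using ab(1) by simp
  qed
  show ?thesis using *[of k k'] *[of k' k] k k' e by (cases "k \<le> k'") auto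
qed

context param begin

lemma Phi_surj:
  assumes W: "W \<in> carrier (product_group {d. d dvd n \<and> d \<noteq> 1} (\<lambda>d. wreath d (alpha d (card A))))"
    and \<pi>: "\<pi> permutes {1..card A}"
  shows "(W, \<pi>) \<in> Phi ` Units (CA_monoid n A)"
proof -
  define pp where "pp d = (if d = 1 then \<pi> else snd (W d))" for d
  define vw where "vw d j = (if d = 1 then 0 else fst (W d) j)" for d j
  define \<psi> where "\<psi> d = Hilbert_Choice.inv (pp d)" for d
  define f where "f = (\<lambda>(d, j, k). (d, \<psi> d j, (k + vw d j) mod d))"
  define \<tau> where "\<tau> = (\<lambda>x\<in>configs n A. \<beta> (f (bi x)))"
  have Wd: "W d \<in> carrier (wreath d (alpha d (card A)))" if "d dvd n" "d \<noteq> 1" for d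
    using W that by auto
  have pp: "pp d permutes {1..alpha d (card A)}" if d: "d dvd n" for d
    using Wd[OF d] \<pi> alpha_1 unfolding pp_def wreath_carrier by (cases "d = 1") auto
  have \<psi>p: "\<psi> d permutes {1..alpha d (card A)}" if d: "d dvd n" for d
    unfolding \<psi>_def using permutes_inv[OF pp[OF d]] .
  have vw: "vw d j < d" if d: "d dvd n" and j: "j \<in> {1..alpha d (card A)}" for d j
  proof (cases "d = 1")
    case True then show ?thesis unfolding vw_def by simp
  next
    case False then show ?thesis using Wd[OF d False] j unfolding vw_def wreath_carrier by auto
  qed
  have fY: "f y \<in> Y n (card A)" if y: "y \<in> Y n (card A)" for y
  proof -
    obtain d j k where yy: "y = (d, j, k)" by (metis prod_cases3)
    have "\<psi> d j \<in> {1..alpha d (card A)}" using y yy permutes_in_image[OF \<psi>p] by (auto simp: Y_mem)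
    then show ?thesis using y yy Y_d0[of d j k] unfolding f_def by (auto simp: Y_mem)
  qed
  have finY: "finite (Y n (card A))" using bij_betw_finite[OF bij] finite_configs[OF finA] by simp
  have injf: "inj_on f (Y n (card A))"
  proof (rule inj_onI)
    fix y y' assume y: "y \<in> Y n (card A)" and y': "y' \<in> Y n (card A)" and e: "f y = f y'"
    obtain d j k where yy: "y = (d, j, k)" by (metis prod_cases3)
    obtain d' j' k' where yy': "y' = (d', j', k')" by (metis prod_cases3)
    have dd: "d = d'" and ps: "\<psi> d j = \<psi> d j'" and m: "(k + vw d j) mod d = (k' + vw d j') mod d"
      using e yy yy' unfolding f_def by auto
    have jj: "j = j'" using ps permutes_inj[OF \<psi>p] y y' yy yy' dd by (auto simp: Y_mem inj_def)
    have "k = k'" using mod_add_cancel_lt[of k d k' "vw d j"] m y y' yy yy' dd jj by (simp add: Y_mem)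
    then show "y = y'" using yy yy' dd jj by simp
  qed
  have bf: "bij_betw f (Y n (card A)) (Y n (card A))"
  proof -
    have "f ` Y n (card A) \<subseteq> Y n (card A)" using fY by blast
    then have "f ` Y n (card A) = Y n (card A)" using endo_inj_surj[OF finY _ injf] by blast
    then show ?thesis unfolding bij_betw_def using injf by blast
  qed
  have bt0: "bij_betw (\<beta> \<circ> f \<circ> bi) (configs n A) (configs n A)"
    unfolding bi_def
    using bij_betw_trans[OF bij_betw_trans[OF bij_betw_inv_into[OF bij] bf] bij] by (simp add: comp_assoc)
  have bt: "bij_betw \<tau> (configs n A) (configs n A)"
    using bt0 unfolding \<tau>_def by (rule bij_betw_cong[THEN iffD1, rotated]) simp
  have tin: "\<tau> \<in> configs n A \<rightarrow>\<^sub>E configs n A" unfolding \<tau>_def using \<beta>_in fY bi_in by auto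
  have eq: "sh n g (\<tau> x) = \<tau> (sh n g x)" if x: "x \<in> configs n A" for x g
  proof -
    obtain d j k where y: "bi x = (d, j, k)" by (metis prod_cases3)
    have yy: "(d, j, k) \<in> Y n (card A)" using bi_in[OF x] y by simp
    have yg: "(d, j, (k + g) mod d) \<in> Y n (card A)" using yy Y_d0[OF yy] by (simp add: Y_mem)
    have fy: "f (d, j, k) \<in> Y n (card A)" by (rule fY[OF yy])
    have xs: "sh n g x = \<beta> (d, j, (k + g) mod d)" using compat[OF yy, of g] \<beta>_bi[OF x] y by simp
    have "\<tau> (sh n g x) = \<beta> (d, \<psi> d j, ((k + g) mod d + vw d j) mod d)"
      unfolding \<tau>_def using sh_in[OF n0 x] xs bi_\<beta>[OF yg] \<beta>_in[OF yg] by (simp add: f_def)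
    moreover have "sh n g (\<tau> x) = \<beta> (d, \<psi> d j, ((k + vw d j) mod d + g) mod d)"
      unfolding \<tau>_def using x y compat[OF fy[unfolded f_def, simplified], of g] by (simp add: f_def)
    moreover have "((k + g) mod d + vw d j) mod d = ((k + vw d j) mod d + g) mod d"
      by (simp add: mod_add_left_eq mod_add_right_eq) (simp add: ac_simps)
    ultimately show ?thesis by simp
  qed
  have tU: "\<tau> \<in> Units (CA_monoid n A)"
  proof -
    have "is_CA n A \<tau>" unfolding is_CA_iff[OF n0] using tin eq by blast
    then show ?thesis unfolding Units_CA[OF n0] using bt by blast
  qed
  have Dt: "D \<tau> d j = (d, \<psi> d j, vw d j)" if d: "d dvd n" and j: "j \<in> {1..alpha d (card A)}" for d j
  proof -
    have y: "(d, j, 0) \<in> Y n (card A)" using d j dvd_pos by (simp add: Y_mem)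
    have "f (d, j, 0) = (d, \<psi> d j, vw d j)" unfolding f_def using vw[OF d j] by simp
    then show ?thesis unfolding D_def \<tau>_def using \<beta>_in[OF y] bi_\<beta>[OF y] bi_\<beta>[OF fY[OF y]] by simp
  qed
  have pst: "ps \<tau> d = \<psi> d" if d: "d dvd n" for d
  proof
    fix j show "ps \<tau> d j = \<psi> d j"
      using Dt[OF d] permutes_not_in[OF \<psi>p[OF d]] unfolding ps_def by (cases "j \<in> {1..alpha d (card A)}") auto
  qed
  have vvt: "vv \<tau> d = restrict (vw d) {1..alpha d (card A)}" if d: "d dvd n" for d
    unfolding vv_def using Dt[OF d] by (intro restrict_ext) simp
  have bpp: "bij (pp d)" if d: "d dvd n" for d using permutes_bij[OF pp[OF d]] .
  have comp1: "(vv \<tau> d, Hilbert_Choice.inv (ps \<tau> d)) = W d" if d: "d dvd n" "d \<noteq> 1" for d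
  proof -
    have "fst (W d) \<in> {1..alpha d (card A)} \<rightarrow>\<^sub>E {0..<d}" using Wd[OF d] unfolding wreath_carrier by auto
    then have "restrict (vw d) {1..alpha d (card A)} = fst (W d)"
      unfolding vw_def using d(2) by (simp add: PiE_restrict)
    moreover have "Hilbert_Choice.inv (ps \<tau> d) = snd (W d)"
      using pst[OF d(1)] inv_inv_eq[OF bpp[OF d(1)]] d(2) unfolding \<psi>_def pp_def by simp
    ultimately show ?thesis using vvt[OF d(1)] by (simp add: prod_eq_iff)
  qed
  have "Phi \<tau> = (W, \<pi>)"
  proof -
    have "(\<lambda>d\<in>{d. d dvd n \<and> d \<noteq> 1}. (vv \<tau> d, Hilbert_Choice.inv (ps \<tau> d))) = W"
    proof -
      have "(\<lambda>d\<in>{d. d dvd n \<and> d \<noteq> 1}. (vv \<tau> d, Hilbert_Choice.inv (ps \<tau> d)))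
           = (\<lambda>d\<in>{d. d dvd n \<and> d \<noteq> 1}. W d)"
        by (rule restrict_ext) (use comp1 in blast)
      also have "\<dots> = W" using W PiE_restrict[of W] by simp
      finally show ?thesis .
    qed
    moreover have "Hilbert_Choice.inv (ps \<tau> 1) = \<pi>"
      using pst[of 1] inv_inv_eq[OF bpp[of 1]] unfolding \<psi>_def pp_def by simp
    ultimately show ?thesis unfolding Phi_def by simp
  qed
  then show ?thesis using tU by (metis image_eqI)
qed

end



theorem lemma4:
  fixes n q :: nat and A :: "'a set"
  assumes "n \<ge> 2" and "finite A" and "card A = q" and "q \<ge> 2"
  shows "ICA n A \<cong>
           DirProd (product_group {d. d dvd n \<and> d \<noteq> 1} (\<lambda>d. wreath d (alpha d q)))
                   (sym_group q)"
proof -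
  have n: "n > 0" using assms(1) by simp
  obtain \<beta> where b: "bij_betw \<beta> (Y n (card A)) (configs n A)"
    and c: "\<forall>d j k g. (d, j, k) \<in> Y n (card A) \<longrightarrow> sh n g (\<beta> (d, j, k)) = \<beta> (d, j, (k + g) mod d)"
    using param_exists[OF n assms(2)] by blast
  interpret param n A \<beta> using n assms(2) b c by unfold_locales auto
  let ?G = "DirProd (product_group {d. d dvd n \<and> d \<noteq> 1} (\<lambda>d. wreath d (alpha d (card A)))) (sym_group (card A))"
  have cI: "carrier (ICA n A) = Units (CA_monoid n A)" by (simp add: ICA_def units_of_def)
  have mI: "monoid.mult (ICA n A) = monoid.mult (CA_monoid n A)" by (simp add: ICA_def units_of_def)
  have hom: "Phi \<in> hom (ICA n A) ?G"
    unfolding hom_def cI mI using Phi_in Phi_hom by auto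
  have img: "Phi ` Units (CA_monoid n A) = carrier ?G"
  proof
    show "Phi ` Units (CA_monoid n A) \<subseteq> carrier ?G" using Phi_in by blast
    show "carrier ?G \<subseteq> Phi ` Units (CA_monoid n A)"
    proof
      fix z assume "z \<in> carrier ?G"
      then obtain W \<pi> where z: "z = (W, \<pi>)"
        and W: "W \<in> carrier (product_group {d. d dvd n \<and> d \<noteq> 1} (\<lambda>d. wreath d (alpha d (card A))))"
        and p: "\<pi> permutes {1..card A}"
        by (auto simp: DirProd_def sym_group_def)
      show "z \<in> Phi ` Units (CA_monoid n A)" using Phi_surj[OF W p] z by simp
    qed
  qed
  have "Phi \<in> iso (ICA n A) ?G"
    unfolding iso_def bij_betw_def using hom img Phi_inj cI by simp
  then show ?thesis using assms(3) is_isoI by blast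
qed


end
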